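(* Let $\varphi\in\Xi_p$ be such that $\lim_{x\to0}\frac{\phi_p(x)}{\varphi(x)}=\lim_{x\to0}\frac{\sqrt{-x\ln x}}{\varphi(x)}=0$. Let $(\mathbf{x}_n)$ be a sequence in $C_0([0,1],G(\mathbb{R}^d))$ converging pointwise to $\mathbf{x}\in C_0([0,1],G(\mathbb{R}^d))$, and assume $\sup_n\|\mathbf{x}_n\|_{\phi_p}<\infty$. Then $d_\varphi(\mathbf{x}_n,\mathbf{x})\to0$ as $n\to\infty$.
   Context: Fix $d\geq2$, $p\in(2,3)$. $G(\mathbb{R}^d)$ is the set of $g=(g^1,g^2)\in\mathbb{R}^d\oplus(\mathbb{R}^d\otimes\mathbb{R}^d)$ whose symmetric part of $g^2$ is $\frac12g^1\otimes g^1$, with product $g\otimes h=(g^1+h^1,g^2+g^1\otimes h^1+h^2)$, identity $(0,0)=:\exp(0)$, inverse $(g^1,g^2)^{-1}=(-g^1,-g^2+g^1\otimes g^1)$; for $x\in\mathbb{R}^d$, $\exp(x)=(x,\frac12x\otimes x)$; $\|g\|=\inf\{\sum_i|x^i|:x^i\in\mathbb{R}^d,\exp(x^1)\otimes\cdots\otimes\exp(x^n)=g\}$, with its induced topology on $G(\mathbb{R}^d)$. $C_0([0,1],G(\mathbb{R}^d))$: continuous paths with $\mathbf{x}_0=\exp(0)$; $\mathbf{x}_{s,t}=\mathbf{x}_s^{-1}\otimes\mathbf{x}_t$; $d_\varphi(\mathbf{x},\mathbf{y})=\sup_{0\leq s<t\leq1}\|\mathbf{x}_{s,t}^{-1}\otimes\mathbf{y}_{s,t}\|/\varphi(t-s)$;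 $\|\mathbf{x}\|_\psi=\sup_{0\leq s<t\leq1}\|\mathbf{x}_{s,t}\|/\psi(t-s)$. $\Xi_p$: $\varphi:[0,1]\to[0,\infty)$ with $\varphi(0)=0$ and $\varphi^p$ strictly increasing and convex. $\zeta(x)=\frac{1}{2\sqrt2}\int_0^x\sqrt{\log(1+u^{-2})/u}\,du$; $\phi_p$ is the $p$-th root of the smallest convex function on $[0,1]$ dominating $\zeta^p$. *)

theory Defs
  imports "HOL-Analysis.Analysis"
begin

text \<open>Step-2 free nilpotent group over R^d, elements (g1, g2) with g2 a d x d matrix.\<close>

type_synonym 'd grp = "(real ^ 'd) \<times> (real ^ 'd ^ 'd)"

definition tens :: "real ^ 'd \<Rightarrow> real ^ 'd \<Rightarrow> real ^ 'd ^ 'd" where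
  "tens x y = (\<chi> i j. x $ i * y $ j)"

definition inG :: "('d::finite) grp \<Rightarrow> bool" where
  "inG g \<longleftrightarrow> (\<chi> i j. (snd g $ i $ j + snd g $ j $ i) / 2) = (1/2) *\<^sub>R tens (fst g) (fst g)"

definition gmult :: "('d::finite) grp \<Rightarrow> 'd grp \<Rightarrow> 'd grp" where
  "gmult g h = (fst g + fst h, snd g + tens (fst g) (fst h) + snd h)"

definition ginv :: "('d::finite) grp \<Rightarrow> 'd grp" where
  "ginv g = (- fst g, - snd g + tens (fst g) (fst g))"

definition gexp :: "real ^ ('d::finite) \<Rightarrow> 'd grp" where
  "gexp x = (x, (1/2) *\<^sub>R tens x x)"

definition ccnorm :: "('d::finite) grp \<Rightarrow> real" where
  "ccnorm g = Inf {sum_list (map norm xs) | xs. foldr gmult (map gexp xs) (gexp 0) = g}"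

definition ccdist :: "('d::finite) grp \<Rightarrow> 'd grp \<Rightarrow> real" where
  "ccdist g h = ccnorm (gmult (ginv g) h)"

definition C0path :: "(real \<Rightarrow> ('d::finite) grp) \<Rightarrow> bool" where
  "C0path x \<longleftrightarrow> (\<forall>t\<in>{0..1}. inG (x t)) \<and> x 0 = gexp 0 \<and>
     (\<forall>t\<in>{0..1}. \<forall>e>0. \<exists>\<delta>>0. \<forall>s\<in>{0..1}. \<bar>s - t\<bar> < \<delta> \<longrightarrow> ccdist (x t) (x s) < e)"

definition incr :: "(real \<Rightarrow> ('d::finite) grp) \<Rightarrow> real \<Rightarrow> real \<Rightarrow> 'd grp" where
  "incr x s t = gmult (ginv (x s)) (x t)"

definition d_phi :: "(real \<Rightarrow> real) \<Rightarrow> (real \<Rightarrow> ('d::finite) grp) \<Rightarrow> (real \<Rightarrow> 'd grp) \<Rightarrow> ereal" where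
  "d_phi \<phi> x y = (SUP (s,t)\<in>{(s,t). 0 \<le> s \<and> s < t \<and> t \<le> 1}.
      ereal (ccnorm (gmult (ginv (incr x s t)) (incr y s t)) / \<phi> (t - s)))"

definition hnorm :: "(real \<Rightarrow> real) \<Rightarrow> (real \<Rightarrow> ('d::finite) grp) \<Rightarrow> ereal" where
  "hnorm \<psi> x = (SUP (s,t)\<in>{(s,t). 0 \<le> s \<and> s < t \<and> t \<le> 1}.
      ereal (ccnorm (incr x s t) / \<psi> (t - s)))"

definition Xi :: "real \<Rightarrow> (real \<Rightarrow> real) \<Rightarrow> bool" where
  "Xi p \<phi> \<longleftrightarrow> (\<forall>x\<in>{0..1}. \<phi> x \<ge> 0) \<and> \<phi> 0 = 0 \<and>
     strict_mono_on {0..1} (\<lambda>x. \<phi> x powr p) \<and> convex_on {0..1} (\<lambda>x. \<phi> x powr p)"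

definition zeta :: "real \<Rightarrow> real" where
  "zeta x = 1 / (2 * sqrt 2) * integral {0..x} (\<lambda>u. sqrt (ln (1 + 1 / u\<^sup>2) / u))"

definition convex_majorant :: "(real \<Rightarrow> real) \<Rightarrow> real \<Rightarrow> real" where
  "convex_majorant f x = Inf {g x | g. convex_on {0..1} g \<and> (\<forall>y\<in>{0..1}. f y \<le> g y)}"

definition phi_p :: "real \<Rightarrow> real \<Rightarrow> real" where
  "phi_p p x = convex_majorant (\<lambda>y. zeta y powr p) x powr (1 / p)"

end

theory Submission
  imports Defs
begin


lemma tens_add_left: "tens (x + y) z = tens x z + tens y z"
  by (simp add: tens_def vec_eq_iff algebra_simps)
lemma tens_add_right: "tens z (x + y) = tens z x + tens z y"
  by (simp add: tens_def vec_eq_iff algebra_simps)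
lemma tens_minus_left: "tens (- x) z = - tens x z"
  by (simp add: tens_def vec_eq_iff algebra_simps)
lemma tens_minus_right: "tens z (- x) = - tens z x"
  by (simp add: tens_def vec_eq_iff algebra_simps)
lemma tens_zero_left[simp]: "tens 0 z = 0"
  by (simp add: tens_def vec_eq_iff)
lemma tens_zero_right[simp]: "tens z 0 = 0"
  by (simp add: tens_def vec_eq_iff)
lemma tens_scaleR_left: "tens (c *\<^sub>R x) z = c *\<^sub>R tens x z"
  by (simp add: tens_def vec_eq_iff algebra_simps)
lemma tens_scaleR_right: "tens z (c *\<^sub>R x) = c *\<^sub>R tens z x"
  by (simp add: tens_def vec_eq_iff algebra_simps)

lemmas tens_lin = tens_add_left tens_add_right tens_minus_left tens_minus_right
  tens_scaleR_left tens_scaleR_right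

lemma gexp0: "gexp 0 = (0, 0)"
  by (simp add: gexp_def)

lemma gmult_assoc: "gmult (gmult g h) k = gmult g (gmult h k)"
  by (simp add: gmult_def tens_lin algebra_simps)

lemma gmult_e_left[simp]: "gmult (0,0) g = g"
  by (simp add: gmult_def)
lemma gmult_e_right[simp]: "gmult g (0,0) = g"
  by (simp add: gmult_def)
lemma ginv_left[simp]: "gmult (ginv g) g = (0,0)"
  by (simp add: gmult_def ginv_def tens_lin)
lemma ginv_right[simp]: "gmult g (ginv g) = (0,0)"
  by (simp add: gmult_def ginv_def tens_lin)
lemma ginv_left'[simp]: "gmult (ginv g) (gmult g h) = h"
  by (metis gmult_assoc ginv_left gmult_e_left)
lemma ginv_right'[simp]: "gmult g (gmult (ginv g) h) = h"
  by (metis gmult_assoc ginv_right gmult_e_left)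
lemma ginv_ginv[simp]: "ginv (ginv g) = g"
  by (simp add: ginv_def tens_lin)
lemma ginv_gmult: "ginv (gmult g h) = gmult (ginv h) (ginv g)"
  by (simp add: gmult_def ginv_def tens_lin algebra_simps)
lemma ginv_gexp: "ginv (gexp x) = gexp (- x)"
  by (simp add: ginv_def gexp_def tens_lin)
lemma ginv_e[simp]: "ginv (0,0) = (0,0)"
  by (simp add: ginv_def)

lemma commutator:
  "gmult (gexp x) (gmult (gexp y) (gmult (gexp (-x)) (gmult (gexp (-y)) (0,0))))
     = (0, tens x y - tens y x)"
  by (simp add: gmult_def gexp_def tens_def vec_eq_iff algebra_simps)

lemma conj_formula:
  "gmult (ginv c) (gmult g c) = gmult g (0, tens (fst g) (fst c) - tens (fst c) (fst g))"
  by (simp add: gmult_def ginv_def tens_lin algebra_simps)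

lemma central_mult: "gmult (0, A) (0, B) = (0, A + B)"
  by (simp add: gmult_def)



definition lrep :: "(real ^ ('d::finite)) list \<Rightarrow> 'd grp" where
  "lrep xs = foldr gmult (map gexp xs) (gexp 0)"
definition llen :: "(real ^ ('d::finite)) list \<Rightarrow> real" where
  "llen xs = sum_list (map norm xs)"
definition Rep :: "('d::finite) grp set" where
  "Rep = {g. \<exists>xs. lrep xs = g}"

lemma lrep_Nil[simp]: "lrep [] = (0,0)"
  by (simp add: lrep_def gexp0)
lemma lrep_Cons[simp]: "lrep (x # xs) = gmult (gexp x) (lrep xs)"
  by (simp add: lrep_def)
lemma lrep_append: "lrep (xs @ ys) = gmult (lrep xs) (lrep ys)"
  by (induction xs) (simp_all add: gmult_assoc)
lemma lrep_inv: "lrep (rev (map uminus xs)) = ginv (lrep xs)"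
proof (induction xs)
  case Nil then show ?case by simp
next
  case (Cons x xs)
  then show ?case by (simp add: lrep_append ginv_gmult ginv_gexp)
qed
lemma llen_append: "llen (xs @ ys) = llen xs + llen ys"
  by (simp add: llen_def)
lemma llen_inv: "llen (rev (map uminus xs)) = llen xs"
  by (simp add: llen_def rev_map[symmetric] sum_list_rev o_def)
lemma llen_nonneg: "0 \<le> llen xs"
  by (induction xs) (simp_all add: llen_def)
lemma llen_Cons[simp]: "llen (x # xs) = norm x + llen xs"
  by (simp add: llen_def)
lemma llen_Nil[simp]: "llen [] = 0"
  by (simp add: llen_def)

lemma fst_lrep: "norm (fst (lrep xs)) \<le> llen xs"
proof (induction xs)
  case Nil then show ?case by simp
next
  case (Cons x xs)
  have "fst (lrep (x#xs)) = x + fst (lrep xs)" by (simp add: gmult_def gexp_def)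
  then show ?case using Cons norm_triangle_ineq[of x "fst (lrep xs)"] by simp
qed

lemma ccnorm_eq: "ccnorm g = Inf {llen xs | xs. lrep xs = g}"
  by (simp add: ccnorm_def llen_def lrep_def)

lemma ccnorm_le: "lrep xs = g \<Longrightarrow> ccnorm g \<le> llen xs"
  unfolding ccnorm_eq
  by (rule cInf_lower) (auto intro: bdd_belowI[where m=0] simp: llen_nonneg)

lemma ccnorm_ge:
  assumes "g \<in> Rep" "\<And>xs. lrep xs = g \<Longrightarrow> c \<le> llen xs"
  shows "c \<le> ccnorm g"
  unfolding ccnorm_eq using assms by (auto simp: Rep_def intro!: cInf_greatest)

lemma ccnorm_nonneg: "g \<in> Rep \<Longrightarrow> 0 \<le> ccnorm g"
  by (rule ccnorm_ge) (auto simp: llen_nonneg)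

lemma ccnorm_fst: "g \<in> Rep \<Longrightarrow> norm (fst g) \<le> ccnorm g"
  by (rule ccnorm_ge) (auto simp: fst_lrep)

lemma Rep_lrep[simp]: "lrep xs \<in> Rep"
  by (auto simp: Rep_def)

lemma Rep_e[simp]: "(0,0) \<in> Rep"
  by (metis Rep_lrep lrep_Nil)

lemma Rep_mult: "g \<in> Rep \<Longrightarrow> h \<in> Rep \<Longrightarrow> gmult g h \<in> Rep"
  by (auto simp: Rep_def lrep_append[symmetric])

lemma Rep_inv: "g \<in> Rep \<Longrightarrow> ginv g \<in> Rep"
  by (auto simp: Rep_def lrep_inv[symmetric])

lemma ccnorm_e: "ccnorm ((0,0)::('d::finite) grp) = 0"
  using ccnorm_le[of "[]" "(0,0)::'d grp"] ccnorm_nonneg[of "(0,0)::'d grp"] by simp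

lemma ccnorm_mult:
  assumes g: "g \<in> Rep" and h: "h \<in> Rep"
  shows "ccnorm (gmult g h) \<le> ccnorm g + ccnorm h"
proof -
  have "ccnorm (gmult g h) - ccnorm g \<le> llen ys" if ys: "lrep ys = h" for ys
  proof -
    have "ccnorm (gmult g h) - llen ys \<le> ccnorm g"
    proof (rule ccnorm_ge[OF g])
      fix xs assume "lrep xs = g"
      then have "ccnorm (gmult g h) \<le> llen (xs @ ys)"
        using ys by (intro ccnorm_le) (simp add: lrep_append)
      then show "ccnorm (gmult g h) - llen ys \<le> llen xs" by (simp add: llen_append)
    qed
    then show ?thesis by simp
  qed
  then have "ccnorm (gmult g h) - ccnorm g \<le> ccnorm h"
    by (intro ccnorm_ge[OF h])
  then show ?thesis by simp
qed

lemma ccnorm_inv_le: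
  assumes g: "g \<in> Rep"
  shows "ccnorm (ginv g) \<le> ccnorm g"
proof (rule ccnorm_ge[OF g])
  fix xs assume "lrep xs = g"
  then have "ccnorm (ginv g) \<le> llen (rev (map uminus xs))"
    by (intro ccnorm_le) (simp add: lrep_inv)
  then show "ccnorm (ginv g) \<le> llen xs" by (simp add: llen_inv)
qed

lemma ccnorm_inv: "g \<in> Rep \<Longrightarrow> ccnorm (ginv g) = ccnorm g"
  using ccnorm_inv_le[of g] ccnorm_inv_le[of "ginv g"] Rep_inv[of g] by simp

lemma comm_lrep:
  "lrep [x, y, -x, -y] = (0, tens x y - tens y x)"
  using commutator[of x y] by (simp add: gexp0)

lemma Rep_comm: "(0, tens x y - tens y x) \<in> Rep"
  by (metis Rep_lrep comm_lrep)

lemma ccnorm_comm: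
  "ccnorm (0, tens x y - tens y x) \<le> 4 * sqrt (norm x * norm y)"
proof (cases "x = 0 \<or> y = 0")
  case True
  then have "(0, tens x y - tens y x) = ((0,0) :: 'a grp)"
    by auto
  then show ?thesis using ccnorm_e[where 'd='a] by simp
next
  case False
  define l where "l = sqrt (norm y / norm x)"
  have l: "l > 0" using False by (simp add: l_def)
  have "tens (l *\<^sub>R x) ((1/l) *\<^sub>R y) - tens ((1/l) *\<^sub>R y) (l *\<^sub>R x) = tens x y - tens y x"
    using l by (simp add: tens_lin)
  then have "ccnorm (0, tens x y - tens y x) \<le> llen [l *\<^sub>R x, (1/l) *\<^sub>R y, -(l *\<^sub>R x), -((1/l) *\<^sub>R y)]"
    by (intro ccnorm_le) (simp only: comm_lrep)
  also have "\<dots> = 2 * (l * norm x) + 2 * (norm y / l)"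
    using l by simp
  also have "\<dots> = 4 * sqrt (norm x * norm y)"
  proof -
    have a: "norm x > 0" "norm y > 0" using False by auto
    have "sqrt (norm y / norm x) * norm x = sqrt (norm x * norm y)"
      using a by (simp add: real_sqrt_divide real_sqrt_mult field_simps)
    moreover have "norm y / sqrt (norm y / norm x) = sqrt (norm x * norm y)"
      using a by (simp add: real_sqrt_divide real_sqrt_mult field_simps)
    ultimately show ?thesis unfolding l_def by simp
  qed
  finally show ?thesis .
qed

lemma ccnorm_conj:
  assumes g: "g \<in> Rep" and c: "c \<in> Rep"
  shows "ccnorm (gmult (ginv c) (gmult g c)) \<le> ccnorm g + 4 * sqrt (ccnorm g * ccnorm c)"
proof -
  have "ccnorm (gmult (ginv c) (gmult g c))
      = ccnorm (gmult g (0, tens (fst g) (fst c) - tens (fst c) (fst g)))"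
    by (simp add: conj_formula)
  also have "\<dots> \<le> ccnorm g + ccnorm ((0, tens (fst g) (fst c) - tens (fst c) (fst g)) :: 'a grp)"
    by (intro ccnorm_mult g Rep_comm)
  also have "\<dots> \<le> ccnorm g + 4 * sqrt (norm (fst g) * norm (fst c))"
    using ccnorm_comm by simp
  also have "\<dots> \<le> ccnorm g + 4 * sqrt (ccnorm g * ccnorm c)"
  proof -
    have "norm (fst g) * norm (fst c) \<le> ccnorm g * ccnorm c"
      using ccnorm_fst[OF g] ccnorm_fst[OF c] ccnorm_nonneg[OF g] by (intro mult_mono) auto
    then show ?thesis by simp
  qed
  finally show ?thesis .
qed

lemma Rep_central_sum:
  assumes "finite S" "\<And>i. i \<in> S \<Longrightarrow> ((0, f i) :: ('d::finite) grp) \<in> Rep"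
  shows "((0, sum f S) :: 'd grp) \<in> Rep"
  using assms
proof (induction S rule: finite_induct)
  case empty then show ?case by simp
next
  case (insert i S)
  then have "gmult (0, f i) (0, sum f S) \<in> Rep"
    by (intro Rep_mult) auto
  then show ?case using insert by (simp add: central_mult)
qed

lemma axis_sum1: "(\<Sum>i\<in>UNIV. axis i (1::real) $ k * f i) = f (k::'d::finite)"
  by (simp add: axis_def mult_delta_left mult_delta_right)
lemma axis_sum2: "(\<Sum>i\<in>UNIV. f i * axis i (1::real) $ k) = f (k::'d::finite)"
  by (simp add: axis_def mult_delta_left mult_delta_right)

lemma antisym_decomp:
  fixes A :: "real ^ ('d::finite) ^ 'd"
  assumes "\<And>i j. A $ i $ j + A $ j $ i = 0"
  shows "A = (\<Sum>i\<in>UNIV. tens (axis i 1) (\<chi> j. A $ i $ j / 2) - tens (\<chi> j. A $ i $ j / 2) (axis i 1))"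
proof -
  have "(\<Sum>i\<in>UNIV. tens (axis i 1) (\<chi> j. A $ i $ j / 2) - tens (\<chi> j. A $ i $ j / 2) (axis i 1)) $ k $ l
      = A $ k $ l" for k l
  proof -
    have "(\<Sum>i\<in>UNIV. tens (axis i 1) (\<chi> j. A $ i $ j / 2) - tens (\<chi> j. A $ i $ j / 2) (axis i 1)) $ k $ l
        = (\<Sum>i\<in>UNIV. axis i 1 $ k * (A $ i $ l / 2) - A $ i $ k / 2 * axis i 1 $ l)"
      by (simp add: tens_def)
    also have "\<dots> = A $ k $ l / 2 - A $ l $ k / 2"
      by (simp only: sum_subtractf axis_sum1 axis_sum2)
    also have "\<dots> = A $ k $ l" using assms[of k l] by simp
    finally show ?thesis .
  qed
  then show ?thesis by (simp add: vec_eq_iff)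
qed

lemma inG_Rep:
  assumes "inG g"
  shows "g \<in> Rep"
proof -
  obtain a b where g: "g = (a, b)" by (cases g)
  define A where "A = b - (1/2) *\<^sub>R tens a a"
  have sym: "b $ i $ j + b $ j $ i = a $ i * a $ j" for i j
  proof -
    have "(\<chi> i j. (b $ i $ j + b $ j $ i) / 2) $ i $ j = ((1/2) *\<^sub>R tens a a) $ i $ j"
      using assms g by (simp add: inG_def)
    then show ?thesis by (simp add: tens_def)
  qed
  have "A $ i $ j + A $ j $ i = 0" for i j
    using sym[of i j] by (simp add: A_def tens_def algebra_simps)
  then have "(0, A) \<in> Rep"
    by (subst antisym_decomp, assumption, intro Rep_central_sum) (auto intro: Rep_comm)
  moreover have "gexp a \<in> Rep" by (metis Rep_lrep lrep_Cons lrep_Nil gmult_e_right)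
  ultimately have "gmult (gexp a) (0, A) \<in> Rep" by (rule Rep_mult[rotated])
  moreover have "gmult (gexp a) (0, A) = g"
    by (simp add: g gmult_def gexp_def A_def)
  ultimately show ?thesis by simp
qed



definition zf :: "real \<Rightarrow> real" where "zf u = sqrt (ln (1 + 1 / u\<^sup>2) / u)"

lemma zeta_zf: "zeta x = 1 / (2 * sqrt 2) * integral {0..x} zf"
  by (simp add: zeta_def zf_def[abs_def])

lemma zf_bound:
  assumes u: "0 < u" "u \<le> 1"
  shows "zf u \<le> sqrt 5 * u powr (-3/4)"
proof -
  define v where "v = 1 / sqrt u"
  have v1: "v \<ge> 1" unfolding v_def using u by (simp add: real_sqrt_le_1_iff)
  have h1: "1 + 1/u\<^sup>2 \<le> 2/u\<^sup>2"
  proof -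
    have "u\<^sup>2 \<le> 1" using u by (simp add: power_le_one)
    then have "1 \<le> 1/u\<^sup>2" using u by simp
    then show ?thesis by simp
  qed
  have h2: "ln (1 + 1/u\<^sup>2) \<le> ln 2 - 2 * ln u"
  proof -
    have "ln (1 + 1/u\<^sup>2) \<le> ln (2/u\<^sup>2)" using h1 u by (intro ln_mono) auto
    also have "\<dots> = ln 2 - 2 * ln u" using u by (simp add: ln_div ln_realpow)
    finally show ?thesis .
  qed
  have h3: "- ln u \<le> 2 * v"
  proof -
    have "ln v = - ln u / 2" unfolding v_def using u by (simp add: ln_div ln_sqrt)
    moreover have "ln v \<le> v" using v1 ln_le_minus_one[of v] by simp
    ultimately show ?thesis by simp
  qed
  have h4: "ln 2 \<le> v" using v1 ln_2_less_1 by simp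
  have h5: "ln (1 + 1/u\<^sup>2) / u \<le> 5 * (v / u)"
    using h2 h3 h4 u by (simp add: divide_right_mono)
  have h6: "sqrt (v / u) = u powr (-3/4)"
  proof -
    have a: "u powr (3/2) = u * sqrt u"
    proof -
      have "u powr (3/2) = u powr (1 + 1/2)" by simp
      also have "\<dots> = u powr 1 * u powr (1/2)" by (rule powr_add)
      also have "\<dots> = u * sqrt u" using u by (simp add: powr_half_sqrt)
      finally show ?thesis .
    qed
    have "v / u = u powr (-3/2)"
      using u unfolding v_def by (simp add: powr_minus_divide a mult.commute)
    then show ?thesis using u by (simp add: powr_half_sqrt[symmetric] powr_powr)
  qed
  have "zf u \<le> sqrt (5 * (v / u))" unfolding zf_def using h5 by simp
  also have "\<dots> = sqrt 5 * u powr (-3/4)" by (simp only: real_sqrt_mult h6)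
  finally show ?thesis .
qed

lemma zf_nonneg: "u \<ge> 0 \<Longrightarrow> zf u \<ge> 0"
  unfolding zf_def by (intro real_sqrt_ge_zero divide_nonneg_nonneg) auto

lemma zf_cont: "continuous_on {0<..1} zf"
  unfolding zf_def[abs_def]
  by (intro continuous_intros) (auto, smt (verit) zero_le_divide_1_iff zero_le_power2)

lemma zf_int01: "zf integrable_on {0..1}"
proof -
  have "(\<lambda>x. sqrt 5 * x powr (-3/4)) integrable_on {0<..(1::real)}"
    using integrable_cmul[OF integrable_on_powr_from_0'[of "-3/4" 1], of "sqrt 5"] by simp
  then have "zf absolutely_integrable_on {0<..1}"
    by (intro measurable_bounded_by_integrable_imp_absolutely_integrable
        [OF continuous_imp_measurable_on_sets_lebesgue[OF zf_cont], where g="\<lambda>x. sqrt 5 * x powr (-3/4)"])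
       (auto simp: zf_nonneg dest: zf_bound)
  then have "zf integrable_on {0<..1}" by (rule absolutely_integrable_on_def[THEN iffD1, THEN conjunct1])
  then show ?thesis
    by (rule integrable_spike_set) (auto intro: negligible_subset[of "{0}"])
qed

lemma zf_int: "0 \<le> a \<Longrightarrow> b \<le> 1 \<Longrightarrow> zf integrable_on {a..b}"
  by (rule integrable_on_subinterval[OF zf_int01]) auto

lemma zeta_mono: "0 \<le> x \<Longrightarrow> x \<le> y \<Longrightarrow> y \<le> 1 \<Longrightarrow> zeta x \<le> zeta y"
  unfolding zeta_zf
  by (intro mult_left_mono integral_subset_le zf_int) (auto simp: zf_nonneg)

lemma zeta_pos:
  assumes "0 < x" "x \<le> 1"
  shows "0 < zeta x"
proof -
  have i: "((\<lambda>u. sqrt (ln 2) * u powr 1) has_integral (sqrt (ln 2) * (x powr (1+1) / (1+1)))) {0..x}"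
    by (intro has_integral_mult_right has_integral_powr_from_0) (use assms in auto)
  have "sqrt (ln 2) * (x powr (1+1) / (1+1)) \<le> integral {0..x} zf"
  proof (rule has_integral_le[OF i integrable_integral[OF zf_int]])
    fix u assume u: "u \<in> {0..x}"
    show "sqrt (ln 2) * u powr 1 \<le> zf u"
    proof (cases "u = 0")
      case True then show ?thesis by (simp add: zf_def)
    next
      case False
      with u assms have u': "0 < u" "u \<le> 1" by auto
      have "u\<^sup>2 \<le> 1" using u' by (simp add: power_le_one)
      then have "2 \<le> 1 + 1/u\<^sup>2" using u' by simp
      then have "ln 2 \<le> ln (1 + 1/u\<^sup>2)" by (intro ln_mono) auto
      also have "\<dots> \<le> ln (1 + 1/u\<^sup>2) / u" using u' \<open>2 \<le> 1 + 1/u\<^sup>2\<close>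
        by (simp add: le_divide_eq mult_left_le)
      finally have "sqrt (ln 2) \<le> zf u" unfolding zf_def by simp
      moreover have "sqrt (ln 2) * u \<le> sqrt (ln 2)" using u' by (intro mult_left_le) auto
      ultimately have "sqrt (ln 2) * u \<le> zf u" by linarith
      then show ?thesis using u' by simp
    qed
  qed (use assms in auto)
  moreover have "0 < sqrt (ln 2) * (x powr (1+1) / (1+1))" using assms by simp
  ultimately show ?thesis unfolding zeta_zf by simp
qed

lemma zeta_nonneg: "0 \<le> x \<Longrightarrow> x \<le> 1 \<Longrightarrow> 0 \<le> zeta x"
  using zeta_pos[of x] by (cases "x = 0") (auto simp: zeta_def)



lemma cm_bounds:
  assumes p: "p > 0" and h: "0 \<le> h" "h \<le> 1"
  shows "zeta h powr p \<le> convex_majorant (\<lambda>y. zeta y powr p) h"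
    and "convex_majorant (\<lambda>y. zeta y powr p) h \<le> zeta 1 powr p"
proof -
  let ?S = "{g h | g. convex_on {0..1} g \<and> (\<forall>y\<in>{0..1}. zeta y powr p \<le> g y)}"
  have c: "(\<lambda>_. zeta 1 powr p) \<in> {g. convex_on {0..1} g \<and> (\<forall>y\<in>{0..(1::real)}. zeta y powr p \<le> g y)}"
    using p by (auto simp: convex_on_const intro!: powr_mono2 zeta_mono zeta_nonneg)
  then have ne: "?S \<noteq> {}" by blast
  have lb: "\<And>z. z \<in> ?S \<Longrightarrow> zeta h powr p \<le> z" using h by auto
  show "zeta h powr p \<le> convex_majorant (\<lambda>y. zeta y powr p) h"
    unfolding convex_majorant_def by (rule cInf_greatest[OF ne lb])
  have "zeta 1 powr p \<in> ?S" using c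
    by (smt (verit, best) mem_Collect_eq)
  moreover have "bdd_below ?S" by (rule bdd_belowI[where m="zeta h powr p"]) (rule lb)
  ultimately show "convex_majorant (\<lambda>y. zeta y powr p) h \<le> zeta 1 powr p"
    unfolding convex_majorant_def by (rule cInf_lower)
qed

lemma phi_p_pos:
  assumes p: "p > 0" and h: "0 < h" "h \<le> 1"
  shows "phi_p p h > 0"
proof -
  have "0 < zeta h powr p" using zeta_pos[OF h] by simp
  also have "\<dots> \<le> convex_majorant (\<lambda>y. zeta y powr p) h" using cm_bounds(1)[OF p] h by simp
  finally show ?thesis unfolding phi_p_def by simp
qed

lemma phi_p_le:
  assumes p: "p > 0" and h: "0 \<le> h" "h \<le> 1"
  shows "phi_p p h \<le> zeta 1"
proof -
  have z: "0 \<le> zeta h powr p" by simp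
  have "0 \<le> convex_majorant (\<lambda>y. zeta y powr p) h" using cm_bounds(1)[OF p h] z by linarith
  then have "phi_p p h \<le> (zeta 1 powr p) powr (1/p)"
    unfolding phi_p_def using p cm_bounds(2)[OF p h] by (intro powr_mono2) auto
  also have "\<dots> = zeta 1" using p zeta_nonneg[of 1] by (simp add: powr_powr)
  finally show ?thesis .
qed

lemma phi_p_nonneg: "0 \<le> phi_p p h"
  by (simp add: phi_p_def)



lemma Xi_pos:
  assumes X: "Xi p \<phi>" and p: "p > 0" and h: "0 < h" "h \<le> 1"
  shows "\<phi> h > 0"
proof -
  have sm: "strict_mono_on {0..1} (\<lambda>x. \<phi> x powr p)" using X unfolding Xi_def by auto
  have "(\<lambda>x. \<phi> x powr p) 0 < (\<lambda>x. \<phi> x powr p) h"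
    by (rule strict_mono_onD[OF sm]) (use h in auto)
  then have "\<phi> 0 powr p < \<phi> h powr p" by simp
  moreover have "\<phi> 0 = 0" "\<phi> h \<ge> 0" using X h unfolding Xi_def by auto
  ultimately show ?thesis by (cases "\<phi> h = 0") auto
qed

lemma Xi_mono:
  assumes X: "Xi p \<phi>" and p: "p > 0" and ab: "0 \<le> a" "a \<le> b" "b \<le> 1"
  shows "\<phi> a \<le> \<phi> b"
proof (rule ccontr)
  assume "\<not> \<phi> a \<le> \<phi> b"
  then have lt: "\<phi> b < \<phi> a" by simp
  have nn: "\<phi> b \<ge> 0" using X ab unfolding Xi_def by auto
  have "\<phi> b powr p < \<phi> a powr p" using lt nn p by (intro powr_less_mono2) auto
  moreover have "\<phi> a powr p \<le> \<phi> b powr p"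
  proof (cases "a = b")
    case False
    then have "a < b" using ab by simp
    have sm: "strict_mono_on {0..1} (\<lambda>x. \<phi> x powr p)" using X unfolding Xi_def by auto
    have "(\<lambda>x. \<phi> x powr p) a < (\<lambda>x. \<phi> x powr p) b"
      by (rule strict_mono_onD[OF sm]) (use ab \<open>a < b\<close> in auto)
    then show ?thesis by simp
  qed simp
  ultimately show False by simp
qed

lemma Xi_bound:
  assumes X: "Xi p \<phi>" and p: "p > 0" and h: "0 \<le> h" "h \<le> 1"
  shows "\<phi> h \<le> (h * \<phi> 1 powr p) powr (1/p)"
proof -
  have cv: "convex_on {0..1} (\<lambda>x. \<phi> x powr p)" and z: "\<phi> 0 = 0" and nn: "\<phi> h \<ge> 0"
    using X h unfolding Xi_def by auto
  have "\<phi> ((1 - h) *\<^sub>R 0 + h *\<^sub>R 1) powr p \<le> (1 - h) * \<phi> 0 powr p + h * \<phi> 1 powr p"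
    by (rule convex_onD[OF cv]) (use h in auto)
  then have "\<phi> h powr p \<le> h * \<phi> 1 powr p" using z by simp
  then have "(\<phi> h powr p) powr (1/p) \<le> (h * \<phi> 1 powr p) powr (1/p)"
    using p by (intro powr_mono2) auto
  then show ?thesis using nn p by (simp add: powr_powr)
qed

lemma Xi_lim0:
  assumes X: "Xi p \<phi>" and p: "p > 0"
  shows "(\<phi> \<longlongrightarrow> 0) (at_right 0)"
proof (rule tendsto_sandwich[where f="\<lambda>_. 0" and h="\<lambda>h. (h * \<phi> 1 powr p) powr (1/p)"])
  have ev: "\<forall>\<^sub>F h in at_right (0::real). 0 < h \<and> h \<le> 1"
    by (simp add: eventually_at_right_field) (auto intro: exI[of _ 1])
  show "\<forall>\<^sub>F h in at_right 0. 0 \<le> \<phi> h"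
    using ev by eventually_elim (use X in \<open>auto simp: Xi_def\<close>)
  show "\<forall>\<^sub>F h in at_right 0. \<phi> h \<le> (h * \<phi> 1 powr p) powr (1/p)"
    using ev by eventually_elim (use Xi_bound[OF X p] in auto)
  show "((\<lambda>_. 0) \<longlongrightarrow> (0::real)) (at_right 0)" by simp
  show "((\<lambda>h. (h * \<phi> 1 powr p) powr (1/p)) \<longlongrightarrow> 0) (at_right 0)"
  proof (rule tendsto_zero_powrI)
    show "((\<lambda>h. h * \<phi> 1 powr p) \<longlongrightarrow> 0) (at_right 0)"
      by (rule tendsto_eq_intros) (auto intro: tendsto_ident_at)
    show "((\<lambda>h. 1/p) \<longlongrightarrow> 1/p) (at_right 0)" by simp
    show "\<forall>\<^sub>F h in at_right 0. 0 \<le> h * \<phi> 1 powr p"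
      using ev by eventually_elim auto
  qed (use p in auto)
qed



theorem mainTheorem14:
  fixes p :: real and \<phi> :: "real \<Rightarrow> real"
    and xs :: "nat \<Rightarrow> real \<Rightarrow> ('d::finite) grp" and x :: "real \<Rightarrow> 'd grp"
  assumes "CARD('d) \<ge> 2"
    and "2 < p" "p < 3"
    and "Xi p \<phi>"
    and "((\<lambda>t. phi_p p t / \<phi> t) \<longlongrightarrow> 0) (at_right 0)"
    and "((\<lambda>t. sqrt (- t * ln t) / \<phi> t) \<longlongrightarrow> 0) (at_right 0)"
    and "\<And>n. C0path (xs n)" and "C0path x"
    and "\<And>t. t \<in> {0..1} \<Longrightarrow> (\<lambda>n. ccdist (xs n t) (x t)) \<longlonglongrightarrow> 0"
    and "\<exists>B. \<forall>n. hnorm (phi_p p) (xs n) \<le> ereal B"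
  shows "(\<lambda>n. d_phi \<phi> (xs n) x) \<longlonglongrightarrow> 0"
proof -
  have p: "p > 0" using assms(2) by simp
  have X: "Xi p \<phi>" by (fact assms(4))
  define \<psi> where "\<psi> = phi_p p"
  define e where "e n t = gmult (ginv (xs n t)) (x t)" for n t
  have Rx: "x t \<in> Rep" if "t \<in> {0..1}" for t
    using assms(8) that by (auto simp: C0path_def intro: inG_Rep)
  have Rxs: "xs n t \<in> Rep" if "t \<in> {0..1}" for n t
    using assms(7)[of n] that by (auto simp: C0path_def intro: inG_Rep)
  have Re: "e n t \<in> Rep" if "t \<in> {0..1}" for n t
    unfolding e_def using that by (intro Rep_mult Rep_inv Rx Rxs)
  have Rix: "incr x s t \<in> Rep" if "s \<in> {0..1}" "t \<in> {0..1}" for s t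
    unfolding incr_def using that by (intro Rep_mult Rep_inv Rx Rxs)
  have Rixs: "incr (xs n) s t \<in> Rep" if "s \<in> {0..1}" "t \<in> {0..1}" for n s t
    unfolding incr_def using that by (intro Rep_mult Rep_inv Rx Rxs)
  have econv: "(\<lambda>n. ccnorm (e n t)) \<longlonglongrightarrow> 0" if "t \<in> {0..1}" for t
    using assms(9)[OF that] by (simp add: e_def ccdist_def)
  have psi_pos: "\<psi> h > 0" if "0 < h" "h \<le> 1" for h
    unfolding \<psi>_def using phi_p_pos[OF p that] .
  have phi_pos: "\<phi> h > 0" if "0 < h" "h \<le> 1" for h
    using Xi_pos[OF X p that] .
  obtain B0 where B0: "\<And>n. hnorm (phi_p p) (xs n) \<le> ereal B0" using assms(10) by blast
  define B where "B = max B0 0"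
  have B_nonneg: "0 \<le> B" by (simp add: B_def)
  have Bxs: "ccnorm (incr (xs n) s t) \<le> B * \<psi> (t - s)" if st: "0 \<le> s" "s < t" "t \<le> 1" for n s t
  proof -
    have "ereal (ccnorm (incr (xs n) s t) / \<psi> (t - s)) \<le> hnorm (phi_p p) (xs n)"
      unfolding hnorm_def \<psi>_def by (rule SUP_upper2[where i="(s,t)"]) (use st in auto)
    also have "\<dots> \<le> ereal B0" by (rule B0)
    finally have "ccnorm (incr (xs n) s t) / \<psi> (t - s) \<le> B0" by simp
    moreover have "\<psi> (t - s) > 0" using st by (intro psi_pos) auto
    ultimately have "ccnorm (incr (xs n) s t) \<le> B0 * \<psi> (t - s)" by (simp add: divide_le_eq)
    also have "\<dots> \<le> B * \<psi> (t - s)" using \<open>\<psi> (t - s) > 0\<close> by (intro mult_right_mono) (auto simp: B_def)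
    finally show ?thesis .
  qed
  define Zb where "Zb = zeta 1"
  have psi_le: "\<psi> h \<le> Zb" if "0 \<le> h" "h \<le> 1" for h
    unfolding \<psi>_def Zb_def using phi_p_le[OF p that] .
  define K where "K = B * Zb"
  have BK: "ccnorm (incr (xs n) s t) \<le> K" if st: "0 \<le> s" "s < t" "t \<le> 1" for n s t
  proof -
    have "\<psi> (t - s) \<le> Zb" using st by (intro psi_le) auto
    then have "B * \<psi> (t - s) \<le> B * Zb" using B_nonneg by (rule mult_left_mono)
    then show ?thesis using Bxs[OF st, of n] unfolding K_def by linarith
  qed
  have ident: "gmult (ginv (incr (xs n) s t)) (incr x s t)
      = gmult (gmult (ginv (incr (xs n) s t)) (gmult (ginv (e n s)) (incr (xs n) s t))) (e n t)" for n s t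
    by (simp add: incr_def e_def ginv_gmult gmult_assoc)
  have key: "ccnorm (gmult (ginv (incr (xs n) s t)) (incr x s t))
      \<le> ccnorm (e n s) + 4 * sqrt (ccnorm (e n s) * K) + ccnorm (e n t)"
    if st: "0 \<le> s" "s < t" "t \<le> 1" for n s t
  proof -
    have s: "s \<in> {0..1}" and t: "t \<in> {0..1}" using st by auto
    let ?c = "incr (xs n) s t"
    have "ccnorm (gmult (ginv ?c) (incr x s t))
       \<le> ccnorm (gmult (ginv ?c) (gmult (ginv (e n s)) ?c)) + ccnorm (e n t)"
      unfolding ident by (intro ccnorm_mult Re Rep_mult Rep_inv Rixs s t)
    also have "\<dots> \<le> ccnorm (ginv (e n s)) + 4 * sqrt (ccnorm (ginv (e n s)) * ccnorm ?c) + ccnorm (e n t)"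
      using ccnorm_conj[OF Rep_inv[OF Re[OF s]] Rixs[OF s t]] by simp
    also have "\<dots> \<le> ccnorm (e n s) + 4 * sqrt (ccnorm (e n s) * K) + ccnorm (e n t)"
    proof -
      have "sqrt (ccnorm (e n s) * ccnorm ?c) \<le> sqrt (ccnorm (e n s) * K)"
        using BK[OF st, of n] ccnorm_nonneg[OF Re[OF s]]
        by (intro real_sqrt_le_mono mult_left_mono) auto
      moreover have "ccnorm (ginv (e n s)) = ccnorm (e n s)" using ccnorm_inv[OF Re[of s n, OF s]] .
      ultimately show ?thesis by simp
    qed
    finally show ?thesis .
  qed
  have xB: "ccnorm (incr x s t) \<le> B * \<psi> (t - s)" if st: "0 \<le> s" "s < t" "t \<le> 1" for s t
  proof -
    have s: "s \<in> {0..1}" and t: "t \<in> {0..1}" using st by auto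
    have le: "ccnorm (incr x s t) \<le> B * \<psi> (t - s) + (ccnorm (e n s) + 4 * sqrt (ccnorm (e n s) * K) + ccnorm (e n t))" for n
    proof -
      let ?c = "incr (xs n) s t"
      have "incr x s t = gmult ?c (gmult (ginv ?c) (incr x s t))" by simp
      then have "ccnorm (incr x s t) \<le> ccnorm ?c + ccnorm (gmult (ginv ?c) (incr x s t))"
        using ccnorm_mult[OF Rixs[where n=n, OF s t] Rep_mult[OF Rep_inv[OF Rixs[where n=n, OF s t]] Rix[OF s t]]]
        by simp
      then show ?thesis using Bxs[OF st, of n] key[OF st, of n] by linarith
    qed
    have lim: "(\<lambda>n. B * \<psi> (t - s) + (ccnorm (e n s) + 4 * sqrt (ccnorm (e n s) * K) + ccnorm (e n t)))
        \<longlonglongrightarrow> B * \<psi> (t - s) + (0 + 4 * sqrt (0 * K) + 0)"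
      by (intro tendsto_intros econv s t)
    show ?thesis
      using tendsto_le[OF trivial_limit_sequentially lim tendsto_const, of "ccnorm (incr x s t)"] le
      by simp
  qed
  have psi_lim: "(\<psi> \<longlongrightarrow> 0) (at_right 0)"
  proof -
    have "((\<lambda>h. (phi_p p h / \<phi> h) * \<phi> h) \<longlongrightarrow> 0 * 0) (at_right 0)"
      by (intro tendsto_mult assms(5) Xi_lim0[OF X p])
    moreover have "\<forall>\<^sub>F h in at_right (0::real). (phi_p p h / \<phi> h) * \<phi> h = \<psi> h"
    proof -
      have "\<forall>\<^sub>F h in at_right (0::real). 0 < h \<and> h \<le> 1"
        by (simp add: eventually_at_right_field) (auto intro: exI[of _ 1])
      then show ?thesis
      proof eventually_elim
        case (elim h)
        then have "\<phi> h \<noteq> 0" using phi_pos[of h] by simp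
        then show ?case by (simp add: \<psi>_def)
      qed
    qed
    ultimately show ?thesis by (simp add: tendsto_cong)
  qed
  have unif: "\<exists>M. \<forall>n\<ge>M. \<forall>s\<in>{0..1}. ccnorm (e n s) < \<epsilon>" if \<epsilon>: "\<epsilon> > 0" for \<epsilon>
  proof -
    have "((\<lambda>h. B * \<psi> h) \<longlongrightarrow> B * 0) (at_right 0)" by (intro tendsto_mult_left psi_lim)
    then have "\<forall>\<^sub>F h in at_right 0. B * \<psi> h < \<epsilon>/4"
      by (rule order_tendstoD) (use \<epsilon> in simp)
    then obtain \<eta> where \<eta>: "\<eta> > 0" "\<And>h. 0 < h \<Longrightarrow> h < \<eta> \<Longrightarrow> B * \<psi> h < \<epsilon>/4"
      by (auto simp: eventually_at_right_field)
    obtain m where m: "inverse (real (Suc m)) < \<eta>" using reals_Archimedean \<eta>(1) by blast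
    define Kn where "Kn = Suc m"
    have Kn: "real Kn > 0" "1 / real Kn < \<eta>" using m by (auto simp: Kn_def field_simps)
    have grid: "real k / real Kn \<in> {0..1}" if "k \<le> Kn" for k
      using that Kn by auto
    have "\<forall>\<^sub>F n in sequentially. \<forall>k\<in>{..Kn}. ccnorm (e n (real k / real Kn)) < \<epsilon>/2"
    proof (intro eventually_ball_finite ballI)
      fix k assume "k \<in> {..Kn}"
      then show "\<forall>\<^sub>F n in sequentially. ccnorm (e n (real k / real Kn)) < \<epsilon>/2"
        using grid[of k] by (intro order_tendstoD(2)[OF econv]) (use \<epsilon> in auto)
    qed simp
    then obtain M where M: "\<And>n k. n \<ge> M \<Longrightarrow> k \<le> Kn \<Longrightarrow> ccnorm (e n (real k / real Kn)) < \<epsilon>/2"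
      by (auto simp: eventually_sequentially)
    have "ccnorm (e n s) < \<epsilon>" if n: "n \<ge> M" and s: "s \<in> {0..1}" for n s
    proof -
      define k where "k = nat \<lfloor>s * Kn\<rfloor>"
      have sK: "0 \<le> s * Kn" using s Kn by auto
      have k1: "real k \<le> s * Kn" using sK unfolding k_def by linarith
      have k2: "s * Kn < real k + 1" using sK unfolding k_def by linarith
      have k3: "k \<le> Kn"
      proof -
        have "s * Kn \<le> Kn" using s Kn by auto
        then show ?thesis using k1 by linarith
      qed
      define r where "r = real k / real Kn"
      have r: "0 \<le> r" "r \<le> s" "s - r < \<eta>"
      proof -
        show "0 \<le> r" unfolding r_def by simp
        show "r \<le> s" unfolding r_def using k1 Kn by (simp add: divide_le_eq mult.commute)
        have "s - r = (s * Kn - real k) / Kn" unfolding r_def using Kn by (simp add: field_simps)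
        also have "\<dots> < 1 / Kn" using k2 Kn by (intro divide_strict_right_mono) auto
        finally have "s - r < 1 / real Kn" .
        then show "s - r < \<eta>" using Kn by linarith
      qed
      have er: "ccnorm (e n r) < \<epsilon>/2" unfolding r_def using M[OF n k3] .
      show ?thesis
      proof (cases "r = s")
        case True then show ?thesis using er \<epsilon> by simp
      next
        case False
        then have rs: "r < s" using r by simp
        have r01: "r \<in> {0..1}" using r s by auto
        have "e n s = gmult (incr (xs n) s r) (gmult (e n r) (incr x r s))"
          by (simp add: e_def incr_def gmult_assoc)
        then have "ccnorm (e n s) \<le> ccnorm (incr (xs n) s r) + (ccnorm (e n r) + ccnorm (incr x r s))"
          using ccnorm_mult[OF Rixs[where n=n, OF s r01] Rep_mult[OF Re[of r n, OF r01] Rix[OF r01 s]]]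
            ccnorm_mult[OF Re[of r n, OF r01] Rix[OF r01 s]]
          by simp
        moreover have "ccnorm (incr (xs n) s r) = ccnorm (incr (xs n) r s)"
        proof -
          have "incr (xs n) s r = ginv (incr (xs n) r s)" by (simp add: incr_def ginv_gmult)
          then show ?thesis using ccnorm_inv[OF Rixs[where n=n, OF r01 s]] by simp
        qed
        moreover have "ccnorm (incr (xs n) r s) \<le> B * \<psi> (s - r)" using Bxs[of r s n] r rs s by auto
        moreover have "ccnorm (incr x r s) \<le> B * \<psi> (s - r)" using xB[of r s] r rs s by auto
        moreover have "B * \<psi> (s - r) < \<epsilon>/4" using \<eta>(2)[of "s - r"] rs r by auto
        ultimately show ?thesis using er by linarith
      qed
    qed
    then show ?thesis by blast
  qed
  have main: "\<exists>M. \<forall>n\<ge>M. d_phi \<phi> (xs n) x \<le> ereal \<epsilon>" if \<epsilon>: "\<epsilon> > 0" for \<epsilon>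
  proof -
    have "\<forall>\<^sub>F h in at_right 0. phi_p p h / \<phi> h < \<epsilon> / (2 * B + 1)"
      by (rule order_tendstoD(2)[OF assms(5)]) (use \<epsilon> B_nonneg in simp)
    then obtain \<delta> where \<delta>: "\<delta> > 0" "\<And>h. 0 < h \<Longrightarrow> h < \<delta> \<Longrightarrow> \<psi> h / \<phi> h < \<epsilon> / (2 * B + 1)"
      by (auto simp: eventually_at_right_field \<psi>_def)
    define \<delta>' where "\<delta>' = min \<delta> 1"
    have \<delta>': "0 < \<delta>'" "\<delta>' \<le> 1" "\<delta>' \<le> \<delta>" using \<delta> by (auto simp: \<delta>'_def)
    define a where "a = \<epsilon> * \<phi> \<delta>' / 2"
    have a: "a > 0" using \<epsilon> phi_pos[OF \<delta>'(1,2)] by (simp add: a_def)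
    have K: "K \<ge> 0" unfolding K_def Zb_def using B_nonneg zeta_nonneg[of 1] by simp
    define \<epsilon>' where "\<epsilon>' = min (a/4) (a\<^sup>2 / (64 * (K + 1)))"
    have \<epsilon>': "\<epsilon>' > 0" using a K by (simp add: \<epsilon>'_def)
    have sq: "4 * sqrt (u * K) \<le> a/2" if "0 \<le> u" "u \<le> \<epsilon>'" for u
    proof -
      have "u * K \<le> a\<^sup>2 / (64 * (K + 1)) * K"
        using that K by (intro mult_right_mono) (auto simp: \<epsilon>'_def)
      also have "\<dots> \<le> a\<^sup>2 / 64"
        using K by (simp add: field_simps)
      also have "\<dots> = (a / 8)\<^sup>2" by (simp add: power2_eq_square)
      finally have "sqrt (u * K) \<le> sqrt ((a / 8)\<^sup>2)" by (rule real_sqrt_le_mono)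
      also have "\<dots> = a / 8" using a by simp
      finally have "sqrt (u * K) \<le> a / 8" .
      then show ?thesis by simp
    qed
    obtain M where M: "\<And>n s. n \<ge> M \<Longrightarrow> s \<in> {0..1} \<Longrightarrow> ccnorm (e n s) < \<epsilon>'"
      using unif[OF \<epsilon>'] by blast
    have "d_phi \<phi> (xs n) x \<le> ereal \<epsilon>" if n: "n \<ge> M" for n
      unfolding d_phi_def
    proof (rule SUP_least, clarify)
      fix s t :: real assume st: "0 \<le> s" "s < t" "t \<le> 1"
      have s: "s \<in> {0..1}" and t: "t \<in> {0..1}" using st by auto
      let ?D = "ccnorm (gmult (ginv (incr (xs n) s t)) (incr x s t))"
      have ph: "\<phi> (t - s) > 0" using st by (intro phi_pos) auto
      have "?D / \<phi> (t - s) \<le> \<epsilon>"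
      proof (cases "t - s < \<delta>'")
        case True
        have "?D \<le> ccnorm (ginv (incr (xs n) s t)) + ccnorm (incr x s t)"
          by (intro ccnorm_mult Rep_inv Rixs Rix s t)
        also have "\<dots> = ccnorm (incr (xs n) s t) + ccnorm (incr x s t)"
          using ccnorm_inv[OF Rixs[where n=n, OF s t]] by simp
        also have "\<dots> \<le> 2 * B * \<psi> (t - s)" using Bxs[OF st, of n] xB[OF st] by simp
        finally have "?D / \<phi> (t - s) \<le> 2 * B * (\<psi> (t - s) / \<phi> (t - s))"
          using ph by (simp add: divide_right_mono)
        also have "\<dots> \<le> 2 * B * (\<epsilon> / (2 * B + 1))"
          using \<delta>(2)[of "t - s"] True \<delta>' st B_nonneg
          by (intro mult_left_mono) auto
        also have "\<dots> \<le> \<epsilon>" using B_nonneg \<epsilon> by (simp add: field_simps)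
        finally show ?thesis .
      next
        case False
        have es: "0 \<le> ccnorm (e n s)" "ccnorm (e n s) \<le> \<epsilon>'"
          using ccnorm_nonneg[OF Re[of s n, OF s]] M[OF n s] by auto
        have et: "ccnorm (e n t) < \<epsilon>'" using M[OF n t] .
        have "?D \<le> ccnorm (e n s) + 4 * sqrt (ccnorm (e n s) * K) + ccnorm (e n t)"
          by (rule key[OF st])
        also have "\<dots> \<le> a" using es et sq[OF es] by (simp add: \<epsilon>'_def)
        also have "\<dots> \<le> \<epsilon> * \<phi> (t - s) / 2"
          unfolding a_def using \<epsilon> Xi_mono[OF X p, of \<delta>' "t - s"] False \<delta>' st
          by (intro divide_right_mono mult_left_mono) auto
        finally have "?D / \<phi> (t - s) \<le> \<epsilon> / 2" using ph by (simp add: divide_le_eq)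
        then show ?thesis using \<epsilon> by linarith
      qed
      then show "ereal (?D / \<phi> (t - s)) \<le> ereal \<epsilon>" by simp
    qed
    then show ?thesis by blast
  qed
  have nonneg: "0 \<le> d_phi \<phi> (xs n) x" for n
  proof -
    have "0 \<le> ereal (ccnorm (gmult (ginv (incr (xs n) 0 1)) (incr x 0 1)) / \<phi> (1 - 0))"
      using ccnorm_nonneg[OF Rep_mult[OF Rep_inv[OF Rixs] Rix]] phi_pos[of 1] by simp
    also have "\<dots> \<le> d_phi \<phi> (xs n) x"
      unfolding d_phi_def by (rule SUP_upper2[where i="(0,1)"]) auto
    finally show ?thesis .
  qed
  show ?thesis
  proof (rule order_tendstoI)
    fix a :: ereal assume "a < 0"
    then show "\<forall>\<^sub>F n in sequentially. a < d_phi \<phi> (xs n) x"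
      by (intro always_eventually allI less_le_trans[OF \<open>a < 0\<close> nonneg])
  next
    fix a :: ereal assume a: "0 < a"
    obtain r where r: "0 < r" "ereal r < a"
    proof (cases a)
      case (real r') then show ?thesis using a that[of "r'/2"] by auto
    next
      case PInf then show ?thesis using that[of 1] by auto
    qed (use a in auto)
    obtain M where "\<forall>n\<ge>M. d_phi \<phi> (xs n) x \<le> ereal r" using main[OF r(1)] by blast
    then show "\<forall>\<^sub>F n in sequentially. d_phi \<phi> (xs n) x < a"
      unfolding eventually_sequentially using r(2) by (auto intro: le_less_trans)
  qed
qed

end
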